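(* Consider the following networked control setting. Let $f_p:\mathbb{R}^{n_p}\times\mathbb{R}^{m_p}\to\mathbb{R}^{n_p}$ with $f_p(0,0)=0$, closed sets $\mathbb{X}_p\subseteq\mathbb{R}^{n_p}$, $\mathbb{U}_p\subseteq\mathbb{R}^{m_p}$ containing the origin, matrices $Q,R>0$, and integers $g\in\mathbb{I}_{\geq 1}$, $c\in\mathbb{I}_{\geq g}$, $b\in\mathbb{I}_{\geq c}$, $q:=\lceil c/g\rceil$. The overall state is $x=(x_p,u_s,\beta)\in\mathbb{X}:=\mathbb{X}_p\times\mathbb{U}_p\times\mathbb{I}_{[0,b]}$, the input $u=(u_c,\gamma)\in\mathbb{U}:=\mathbb{U}_p\times\{0,1\}$, and the dynamics are $x(k+1)=f(x(k),u(k))$ with $$f(x,u)=\big(f_p(x_p,\gamma u_c+(1-\gamma)u_s),\ \gamma u_c+(1-\gamma)u_s,\ \min\{\beta+g-\gamma c,b\}\big),$$ stage cost $\ell(x,u)=\|x_p\|_Q^2+\gamma\|u_c\|_R^2+(1-\gamma)\|u_s\|_R^2$. For $u_c\in\mathbb{U}_p$ define $f_{p,0}(x_p,u_c):=x_p$, $f_{p,i}(x_p,u_c):=f_p(f_{p,i-1}(x_p,u_c),u_c)$. Assume: (A1) there exist a closed set $\mathbb{X}_{f,p}\subseteq\mathbb{X}_p$ containing the origin and $k_p:\mathbb{X}_{f,p}\to\mathbb{U}_p$ such that for all $x_p\in\mathbb{X}_{f,p}$: $f_{p,i}(x_p,k_p(x_p))\in\mathbb{X}_p$ for all $i\in\mathbb{I}_{[1,q-1]}$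 and $f_{p,q}(x_p,k_p(x_p))\in\mathbb{X}_{f,p}$; (A2) there is a continuous positive definite $V_{f,p}:\mathbb{X}_{f,p}\to\mathbb{R}$ with, for all $x_p\in\mathbb{X}_{f,p}$, $V_{f,p}(f_{p,q}(x_p,k_p(x_p)))-V_{f,p}(x_p)\leq -q\|k_p(x_p)\|_R^2-\sum_{i=0}^{q-1}\|f_{p,i}(x_p,k_p(x_p))\|_Q^2$; (A3) $c/g\notin\mathbb{I}$. Let $\sigma>0$, $V_f(x):=V_{f,p}(x_p)+\sigma(b^2-\beta^2)$, and $\mathbb{X}_f:=\big(\{0\}\times\{0\}\times\mathbb{I}_{[0,c-g-1]}\big)\cup\big(\mathbb{X}_{f,p}\times\mathbb{U}_p\times\mathbb{I}_{[c-g,b]}\big)$. Fix $r\in\mathbb{I}_{\geq1}$, $M:=rq$, and $N\in\mathbb{I}_{\geq M}$. The closed loop is generated by the rollout scheme: at each $k=jM$, $j\in\mathbb{I}_{\geq0}$, solve the problem $\mathbb{P}(x(jM))$: minimize $\sum_{i=0}^{N-1}\ell(x(i|jM),u(i|jM))+V_f(x(N|jM))$ over $u(0|jM),\dots,u(N-1|jM)$ subject to $x(i+1|jM)=f(x(i|jM),u(i|jM))$, $x(i|jM)\in\mathbb{X}$, $u(i|jM)\in\mathbb{U}$ for $i\in\mathbb{I}_{[0,N-1]}$, $x(0|jM)=x(jM)$, $x(N|jM)\in\mathbb{X}_f$, with optimizer $u^*(\cdot|jM)$, and apply $u(jM+i)=u^*(i|jM)$ for $i\in\mathbb{I}_{[0,M-1]}$.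 Then, if $\mathbb{P}(x(0))$ is feasible, $\mathbb{P}(x(jM))$ is feasible for all $j\in\mathbb{I}_{\geq0}$, and $x_p(k)\to0$ and $u_s(k)\to0$ as $k\to\infty$. Additionally, $\beta(k)$ converges to the set $[\max\{0,b-Ng\},b]$ as $k\to\infty$, and the subsequence $\beta(jM)$ converges to $[\max\{0,b-(N-M)g\},b]$ as $j\to\infty$.
   Context: $\mathbb{I}$ denotes the integers, $\mathbb{I}_{[a,b]}:=\mathbb{I}\cap[a,b]$, $\mathbb{I}_{\geq a}:=\mathbb{I}\cap[a,\infty)$, $\|v\|_A^2:=v^TAv$, and $A>0$ means positive definite. Here $x_p$ is the plant state, $u_s(k)=u_p(k-1)$ is the last applied input held by a zero-order-hold actuator, $\beta$ is the token level of a token bucket (size $b$, token rate $g$, transmission cost $c$), $u_c$ the computed control value and $\gamma\in\{0,1\}$ the transmission decision. "Feasible" means the constraint set of the optimization problem is nonempty. *)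

theory Defs
  imports "HOL-Analysis.Analysis"
begin

definition qf :: "real^'k^'k \<Rightarrow> real^'k \<Rightarrow> real" where
  "qf A v = v \<bullet> (A *v v)"

definition pos_def_mat :: "real^'k^'k \<Rightarrow> bool" where
  "pos_def_mat A \<longleftrightarrow> transpose A = A \<and> (\<forall>v. v \<noteq> 0 \<longrightarrow> qf A v > 0)"

definition fsys :: "(real^'n \<Rightarrow> real^'m \<Rightarrow> real^'n) \<Rightarrow> int \<Rightarrow> int \<Rightarrow> int
    \<Rightarrow> ((real^'n) \<times> (real^'m) \<times> int) \<Rightarrow> ((real^'m) \<times> nat) \<Rightarrow> ((real^'n) \<times> (real^'m) \<times> int)" where
  "fsys fp g c b x u =
     (case x of (xp, us, \<beta>) \<Rightarrow> case u of (uc, \<gamma>) \<Rightarrow>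
        (let ua = real \<gamma> *\<^sub>R uc + (1 - real \<gamma>) *\<^sub>R us
         in (fp xp ua, ua, min (\<beta> + g - int \<gamma> * c) b)))"

definition stage_cost :: "real^'n^'n \<Rightarrow> real^'m^'m
    \<Rightarrow> ((real^'n) \<times> (real^'m) \<times> int) \<Rightarrow> ((real^'m) \<times> nat) \<Rightarrow> real" where
  "stage_cost Q R x u =
     (case x of (xp, us, \<beta>) \<Rightarrow> case u of (uc, \<gamma>) \<Rightarrow>
        qf Q xp + real \<gamma> * qf R uc + (1 - real \<gamma>) * qf R us)"

definition fpi :: "(real^'n \<Rightarrow> real^'m \<Rightarrow> real^'n) \<Rightarrow> nat \<Rightarrow> real^'n \<Rightarrow> real^'m \<Rightarrow> real^'n" where
  "fpi fp i xp uc = ((\<lambda>z. fp z uc) ^^ i) xp"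

definition Xset :: "(real^'n) set \<Rightarrow> (real^'m) set \<Rightarrow> int \<Rightarrow> ((real^'n) \<times> (real^'m) \<times> int) set" where
  "Xset Xp Up b = Xp \<times> Up \<times> {0..b}"

definition Uset :: "(real^'m) set \<Rightarrow> ((real^'m) \<times> nat) set" where
  "Uset Up = Up \<times> {0, 1}"

definition Xf_set :: "(real^'n) set \<Rightarrow> (real^'m) set \<Rightarrow> int \<Rightarrow> int \<Rightarrow> int
    \<Rightarrow> ((real^'n) \<times> (real^'m) \<times> int) set" where
  "Xf_set Xfp Up c g b = ({0} \<times> {0} \<times> {0..c - g - 1}) \<union> (Xfp \<times> Up \<times> {c - g..b})"

definition Vf :: "(real^'n \<Rightarrow> real) \<Rightarrow> real \<Rightarrow> int \<Rightarrow> ((real^'n) \<times> (real^'m) \<times> int) \<Rightarrow> real" where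
  "Vf Vfp \<sigma> b x = Vfp (fst x) + \<sigma> * (real_of_int b ^ 2 - real_of_int (snd (snd x)) ^ 2)"

primrec pred_traj :: "('s \<Rightarrow> 'i \<Rightarrow> 's) \<Rightarrow> 's \<Rightarrow> (nat \<Rightarrow> 'i) \<Rightarrow> nat \<Rightarrow> 's" where
  "pred_traj f x0 u 0 = x0"
| "pred_traj f x0 u (Suc i) = f (pred_traj f x0 u i) (u i)"

definition ocp_feasible_seq :: "('s \<Rightarrow> 'i \<Rightarrow> 's) \<Rightarrow> 's set \<Rightarrow> 'i set \<Rightarrow> 's set \<Rightarrow> nat
    \<Rightarrow> 's \<Rightarrow> (nat \<Rightarrow> 'i) \<Rightarrow> bool" where
  "ocp_feasible_seq f X U Xf N x0 u \<longleftrightarrow>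
     (\<forall>i<N. pred_traj f x0 u i \<in> X \<and> u i \<in> U) \<and> pred_traj f x0 u N \<in> Xf"

definition ocp_cost :: "('s \<Rightarrow> 'i \<Rightarrow> 's) \<Rightarrow> ('s \<Rightarrow> 'i \<Rightarrow> real) \<Rightarrow> ('s \<Rightarrow> real) \<Rightarrow> nat
    \<Rightarrow> 's \<Rightarrow> (nat \<Rightarrow> 'i) \<Rightarrow> real" where
  "ocp_cost f l Vt N x0 u = (\<Sum>i<N. l (pred_traj f x0 u i) (u i)) + Vt (pred_traj f x0 u N)"

definition ocp_feasible :: "('s \<Rightarrow> 'i \<Rightarrow> 's) \<Rightarrow> 's set \<Rightarrow> 'i set \<Rightarrow> 's set \<Rightarrow> nat \<Rightarrow> 's \<Rightarrow> bool" where
  "ocp_feasible f X U Xf N x0 \<longleftrightarrow> (\<exists>u. ocp_feasible_seq f X U Xf N x0 u)"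

definition ocp_optimal :: "('s \<Rightarrow> 'i \<Rightarrow> 's) \<Rightarrow> ('s \<Rightarrow> 'i \<Rightarrow> real) \<Rightarrow> ('s \<Rightarrow> real)
    \<Rightarrow> 's set \<Rightarrow> 'i set \<Rightarrow> 's set \<Rightarrow> nat \<Rightarrow> 's \<Rightarrow> (nat \<Rightarrow> 'i) \<Rightarrow> bool" where
  "ocp_optimal f l Vt X U Xf N x0 u \<longleftrightarrow>
     ocp_feasible_seq f X U Xf N x0 u \<and>
     (\<forall>v. ocp_feasible_seq f X U Xf N x0 v \<longrightarrow> ocp_cost f l Vt N x0 u \<le> ocp_cost f l Vt N x0 v)"

definition P_feasible where
  "P_feasible fp g c b Xp Up Xfp N x0 =
     ocp_feasible (fsys fp g c b) (Xset Xp Up b) (Uset Up) (Xf_set Xfp Up c g b) N x0"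

definition P_optimal where
  "P_optimal fp g c b Xp Up Xfp Q R Vfp \<sigma> N x0 u =
     ocp_optimal (fsys fp g c b) (stage_cost Q R) (Vf Vfp \<sigma> b)
       (Xset Xp Up b) (Uset Up) (Xf_set Xfp Up c g b) N x0 u"

end

theory Submission
  imports Defs
begin

lemma sum_split_add: "(\<Sum>i<a+b. h i) = (\<Sum>i<a. h i) + (\<Sum>i<b. h (a+i::nat))" for h :: "nat \<Rightarrow> 'a::comm_monoid_add"
  by (induction b) (auto simp: add.assoc)

lemma traj_shift: "pred_traj f x0 u (K + i) = pred_traj f (pred_traj f x0 u K) (\<lambda>i. u (K+i)) i"
  by (induction i) auto

lemma traj_append:
  "pred_traj f x0 (\<lambda>i. if i < K then u i else v (i - K)) i =
    (if i \<le> K then pred_traj f x0 u i else pred_traj f (pred_traj f x0 u K) v (i - K))"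
proof (induction i)
  case 0 then show ?case by simp
next
  case (Suc i)
  show ?case
  proof (cases "Suc i \<le> K")
    case True then show ?thesis using Suc by simp
  next
    case False
    then have "i = K \<or> i > K" by auto
    then show ?thesis
    proof
      assume "i = K" then show ?thesis using Suc by simp
    next
      assume "i > K" then show ?thesis using Suc False by (simp add: Suc_diff_le)
    qed
  qed
qed

lemma traj_append_lo:
  "i \<le> K \<Longrightarrow> pred_traj f x0 (\<lambda>i. if i < K then u i else v (i - K)) i = pred_traj f x0 u i"
  by (simp add: traj_append)

lemma traj_append_hi:
  "pred_traj f x0 (\<lambda>i. if i < K then u i else v (i - K)) (K + k) = pred_traj f (pred_traj f x0 u K) v k"
  by (cases k) (simp_all add: traj_append)

definition tailok :: "('s \<Rightarrow> 'i \<Rightarrow> 's) \<Rightarrow> 's set \<Rightarrow> 'i set \<Rightarrow> 's set \<Rightarrow> ('s \<Rightarrow> 'i \<Rightarrow> real) \<Rightarrow> ('s \<Rightarrow> real) \<Rightarrow> nat \<Rightarrow> 's \<Rightarrow> (nat \<Rightarrow> 'i) \<Rightarrow> real \<Rightarrow> bool" where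
  "tailok f X U Xf l Vt K z t e \<longleftrightarrow>
    (\<forall>i<K. pred_traj f z t i \<in> X \<and> t i \<in> U) \<and> pred_traj f z t K \<in> Xf \<and>
    (\<Sum>i<K. l (pred_traj f z t i) (t i)) + Vt (pred_traj f z t K) - Vt z \<le> - e"

lemma tailok_compose:
  assumes 1: "tailok f X U Xf l Vt K1 z t1 e1"
    and 2: "tailok f X U Xf l Vt K2 (pred_traj f z t1 K1) t2 e2"
  shows "tailok f X U Xf l Vt (K1+K2) z (\<lambda>i. if i < K1 then t1 i else t2 (i - K1)) (e1+e2)"
proof -
  let ?w = "\<lambda>i. if i < K1 then t1 i else t2 (i - K1)"
  let ?z = "pred_traj f z t1 K1"
  have lo: "\<And>i. i \<le> K1 \<Longrightarrow> pred_traj f z ?w i = pred_traj f z t1 i"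
    by (rule traj_append_lo)
  have hi: "\<And>k. pred_traj f z ?w (K1 + k) = pred_traj f ?z t2 k"
    by (rule traj_append_hi)
  have A: "\<forall>i<K1+K2. pred_traj f z ?w i \<in> X \<and> ?w i \<in> U"
  proof (intro allI impI)
    fix i assume i: "i < K1 + K2"
    show "pred_traj f z ?w i \<in> X \<and> ?w i \<in> U"
    proof (cases "i < K1")
      case True then show ?thesis using 1 lo[of i] unfolding tailok_def by simp
    next
      case False
      then obtain k where k: "i = K1 + k" "k < K2" using i by (metis add_less_imp_less_left le_Suc_ex not_less)
      then show ?thesis using 2 hi[of k] unfolding tailok_def by simp
    qed
  qed
  have B: "pred_traj f z ?w (K1+K2) \<in> Xf" using 2 hi[of K2] unfolding tailok_def by simp
  have s: "(\<Sum>i<K1+K2. l (pred_traj f z ?w i) (?w i)) =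
      (\<Sum>i<K1. l (pred_traj f z t1 i) (t1 i)) + (\<Sum>k<K2. l (pred_traj f ?z t2 k) (t2 k))"
  proof -
    have "(\<Sum>i<K1+K2. l (pred_traj f z ?w i) (?w i)) =
      (\<Sum>i<K1. l (pred_traj f z ?w i) (?w i)) + (\<Sum>k<K2. l (pred_traj f z ?w (K1+k)) (?w (K1+k)))"
      by (rule sum_split_add)
    also have "(\<Sum>i<K1. l (pred_traj f z ?w i) (?w i)) = (\<Sum>i<K1. l (pred_traj f z t1 i) (t1 i))"
      by (rule sum.cong) (auto simp: lo)
    also have "(\<Sum>k<K2. l (pred_traj f z ?w (K1+k)) (?w (K1+k))) = (\<Sum>k<K2. l (pred_traj f ?z t2 k) (t2 k))"
      by (rule sum.cong) (auto simp: hi)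
    finally show ?thesis .
  qed
  have e: "pred_traj f z ?w (K1+K2) = pred_traj f ?z t2 K2" by (rule hi)
  have c1: "(\<Sum>i<K1. l (pred_traj f z t1 i) (t1 i)) + Vt ?z - Vt z \<le> - e1" using 1 unfolding tailok_def by blast
  have c2: "(\<Sum>k<K2. l (pred_traj f ?z t2 k) (t2 k)) + Vt (pred_traj f ?z t2 K2) - Vt ?z \<le> - e2" using 2 unfolding tailok_def by blast
  have C: "(\<Sum>i<K1+K2. l (pred_traj f z ?w i) (?w i)) + Vt (pred_traj f z ?w (K1+K2)) - Vt z \<le> - (e1+e2)"
    unfolding s e using c1 c2 by linarith
  show ?thesis unfolding tailok_def by (intro conjI A B C)
qed

lemma tailok_mono: "tailok f X U Xf l Vt K z t e' \<Longrightarrow> e \<le> e' \<Longrightarrow> tailok f X U Xf l Vt K z t e"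
  unfolding tailok_def by auto

lemma tailok_iter:
  assumes blk: "\<forall>z\<in>Xf. \<exists>t. tailok f X U Xf l Vt K z t (d z)" and d: "\<forall>z. d z \<ge> 0"
  shows "\<forall>z\<in>Xf. \<exists>t. tailok f X U Xf l Vt (K * Suc n) z t (d z)"
proof (induction n)
  case 0 then show ?case using blk by simp
next
  case (Suc n)
  show ?case
  proof
    fix z assume z: "z \<in> Xf"
    obtain t1 where t1: "tailok f X U Xf l Vt (K * Suc n) z t1 (d z)" using Suc z by blast
    then have "pred_traj f z t1 (K * Suc n) \<in> Xf" unfolding tailok_def by simp
    then obtain t2 where t2: "tailok f X U Xf l Vt K (pred_traj f z t1 (K * Suc n)) t2 (d (pred_traj f z t1 (K * Suc n)))"
      using blk by blast
    have c: "tailok f X U Xf l Vt (K * Suc n + K) z (\<lambda>i. if i < K * Suc n then t1 i else t2 (i - K * Suc n)) (d z + d (pred_traj f z t1 (K * Suc n)))"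
      by (rule tailok_compose[OF t1 t2])
    have eq: "K * Suc n + K = K * Suc (Suc n)" by simp
    have "tailok f X U Xf l Vt (K * Suc (Suc n)) z (\<lambda>i. if i < K * Suc n then t1 i else t2 (i - K * Suc n)) (d z)"
      by (rule tailok_mono[OF c[unfolded eq]]) (simp add: d)
    then show "\<exists>t. tailok f X U Xf l Vt (K * Suc (Suc n)) z t (d z)" by blast
  qed
qed


lemma candidate:
  assumes feas: "ocp_feasible_seq f X U Xf N x0 us" and MN: "M \<le> N"
    and tl: "tailok f X U Xf l Vt M (pred_traj f x0 us N) t d"
  shows "ocp_feasible_seq f X U Xf N (pred_traj f x0 us M) (\<lambda>i. if i < N - M then us (M+i) else t (i - (N - M)))
     \<and> ocp_cost f l Vt N (pred_traj f x0 us M) (\<lambda>i. if i < N - M then us (M+i) else t (i - (N - M)))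
        \<le> ocp_cost f l Vt N x0 us - (\<Sum>i<M. l (pred_traj f x0 us i) (us i)) - d"
proof -
  let ?y = "pred_traj f x0 us M"
  let ?v = "\<lambda>i. us (M+i)"
  let ?w = "\<lambda>i. if i < N - M then ?v i else t (i - (N - M))"
  let ?z = "pred_traj f x0 us N"
  have sh: "\<And>i. pred_traj f ?y ?v i = pred_traj f x0 us (M+i)" by (simp add: traj_shift)
  have zz: "pred_traj f ?y ?v (N - M) = ?z" using sh[of "N-M"] MN by simp
  have lo: "\<And>i. i \<le> N - M \<Longrightarrow> pred_traj f ?y ?w i = pred_traj f x0 us (M+i)"
    using traj_append_lo sh by metis
  have hi: "\<And>k. pred_traj f ?y ?w (N - M + k) = pred_traj f ?z t k"
    using traj_append_hi[of f ?y "N-M" ?v t] zz by simp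
  have F1: "\<forall>i<N. pred_traj f x0 us i \<in> X \<and> us i \<in> U" and F2: "?z \<in> Xf" using feas unfolding ocp_feasible_seq_def by auto
  have T1: "\<forall>i<M. pred_traj f ?z t i \<in> X \<and> t i \<in> U" and T2: "pred_traj f ?z t M \<in> Xf"
    and T3: "(\<Sum>i<M. l (pred_traj f ?z t i) (t i)) + Vt (pred_traj f ?z t M) - Vt ?z \<le> - d"
    using tl unfolding tailok_def by auto
  have NMM: "N = (N - M) + M" using MN by simp
  have A: "\<forall>i<N. pred_traj f ?y ?w i \<in> X \<and> ?w i \<in> U"
  proof (intro allI impI)
    fix i assume i: "i < N"
    show "pred_traj f ?y ?w i \<in> X \<and> ?w i \<in> U"
    proof (cases "i < N - M")
      case True then show ?thesis using F1 lo[of i] by simp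
    next
      case False
      then obtain k where k: "i = N - M + k" "k < M" using i MN by (metis add_diff_inverse_nat add_less_cancel_left NMM)
      then show ?thesis using T1 hi[of k] by simp
    qed
  qed
  have endw: "pred_traj f ?y ?w N = pred_traj f ?z t M" using hi[of M] NMM by simp
  have B: "pred_traj f ?y ?w N \<in> Xf" using endw T2 by simp
  have s1: "(\<Sum>i<N. l (pred_traj f ?y ?w i) (?w i)) =
      (\<Sum>i<N - M. l (pred_traj f x0 us (M+i)) (us (M+i))) + (\<Sum>k<M. l (pred_traj f ?z t k) (t k))"
  proof -
    have "(\<Sum>i<N. l (pred_traj f ?y ?w i) (?w i)) = (\<Sum>i<(N-M)+M. l (pred_traj f ?y ?w i) (?w i))"
      using NMM by simp
    also have "\<dots> = (\<Sum>i<N-M. l (pred_traj f ?y ?w i) (?w i)) + (\<Sum>k<M. l (pred_traj f ?y ?w (N-M+k)) (?w (N-M+k)))"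
      by (rule sum_split_add)
    also have "(\<Sum>i<N-M. l (pred_traj f ?y ?w i) (?w i)) = (\<Sum>i<N - M. l (pred_traj f x0 us (M+i)) (us (M+i)))"
      by (rule sum.cong) (auto simp: lo)
    also have "(\<Sum>k<M. l (pred_traj f ?y ?w (N-M+k)) (?w (N-M+k))) = (\<Sum>k<M. l (pred_traj f ?z t k) (t k))"
      by (rule sum.cong) (auto simp: hi)
    finally show ?thesis .
  qed
  have s2: "(\<Sum>i<N. l (pred_traj f x0 us i) (us i)) =
      (\<Sum>i<M. l (pred_traj f x0 us i) (us i)) + (\<Sum>i<N - M. l (pred_traj f x0 us (M+i)) (us (M+i)))"
  proof -
    have "(\<Sum>i<N. l (pred_traj f x0 us i) (us i)) = (\<Sum>i<M+(N-M). l (pred_traj f x0 us i) (us i))"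
      using MN by simp
    then show ?thesis by (simp add: sum_split_add)
  qed
  have C: "ocp_cost f l Vt N ?y ?w \<le> ocp_cost f l Vt N x0 us - (\<Sum>i<M. l (pred_traj f x0 us i) (us i)) - d"
    unfolding ocp_cost_def s1 s2 endw using T3 by linarith
  show ?thesis using A B C unfolding ocp_feasible_seq_def by blast
qed


lemma beta_gain:
  fixes \<beta> \<beta>' b :: int and \<sigma> :: real
  assumes "0 \<le> \<beta>" "\<beta> \<le> \<beta>'" "\<beta> < b \<Longrightarrow> \<beta> + 1 \<le> \<beta>'" "\<sigma> > 0"
  shows "\<sigma> * (real_of_int b ^ 2 - real_of_int \<beta>' ^ 2) - \<sigma> * (real_of_int b ^ 2 - real_of_int \<beta> ^ 2)
     \<le> - (if \<beta> < b then \<sigma> else 0)"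
proof -
  define B where "B = real_of_int \<beta>"
  define B' where "B' = real_of_int \<beta>'"
  have h0: "0 \<le> B" "B \<le> B'" using assms(1,2) unfolding B_def B'_def by simp_all
  have h1: "B + 1 \<le> B'" if "\<beta> < b" using assms(3)[OF that] unfolding B_def B'_def by linarith
  have e: "\<sigma> * (real_of_int b ^ 2 - B' ^ 2) - \<sigma> * (real_of_int b ^ 2 - B ^ 2)
      = - (\<sigma> * ((B' - B) * (B' + B)))" by (simp add: algebra_simps power2_eq_square)
  have "\<sigma> * ((B' - B) * (B' + B)) \<ge> (if \<beta> < b then \<sigma> else 0)"
  proof (cases "\<beta> < b")
    case True
    with h1 have "1 \<le> B' - B" "1 \<le> B' + B" using h0 by linarith+
    then have "1 * 1 \<le> (B' - B) * (B' + B)" by (intro mult_mono) auto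
    then have "\<sigma> * 1 \<le> \<sigma> * ((B' - B) * (B' + B))"
      using assms(4) by (intro mult_left_mono) auto
    then show ?thesis using True by simp
  next
    case False
    have "0 \<le> (B' - B) * (B' + B)" using h0 by simp
    then show ?thesis using False assms(4) by simp
  qed
  then show ?thesis using e unfolding B_def B'_def by linarith
qed

lemma qf_zero[simp]: "qf A 0 = 0" by (simp add: qf_def)

lemma fsys_hold0: "fsys fp g c b (0, 0, \<beta>) (0, 0) = (fp 0 0, 0, min (\<beta> + g) b)"
  by (simp add: fsys_def)

lemma fsys_send: "fsys fp g c b (xp, us, \<beta>) (uc, 1) = (fp xp uc, uc, min (\<beta> + g - c) b)"
  by (simp add: fsys_def)

lemma fsys_hold: "fsys fp g c b (xp, us, \<beta>) (uc, 0) = (fp xp us, us, min (\<beta> + g) b)"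
  by (simp add: fsys_def)

lemma fpi_Suc: "fpi fp (Suc i) xp uc = fp (fpi fp i xp uc) uc"
  by (simp add: fpi_def)

lemma fpi_0: "fpi fp 0 xp uc = xp"
  by (simp add: fpi_def)

lemma block:
  fixes fp :: "real^'n \<Rightarrow> real^'m \<Rightarrow> real^'n" and Q :: "real^'n^'n" and R :: "real^'m^'m"
    and g c b :: int and q :: nat and \<sigma> :: real
  assumes fp0: "fp 0 0 = 0" and Xp0: "0 \<in> Xp" and Up0: "0 \<in> Up"
    and gcb: "g \<ge> 1" "c \<ge> g" "b \<ge> c" and qg: "int q * g \<ge> c + 1" and q1: "q \<ge> 1"
    and A1: "Xfp \<subseteq> Xp" "0 \<in> Xfp" "\<forall>xp\<in>Xfp. kp xp \<in> Up"
      "\<forall>xp\<in>Xfp. (\<forall>i\<in>{1..q-1}. fpi fp i xp (kp xp) \<in> Xp) \<and> fpi fp q xp (kp xp) \<in> Xfp"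
    and A2: "Vfp 0 = 0" "\<forall>xp\<in>Xfp. Vfp (fpi fp q xp (kp xp)) - Vfp xp
          \<le> - real q * qf R (kp xp) - (\<Sum>i<q. qf Q (fpi fp i xp (kp xp)))"
    and sigma: "\<sigma> > 0"
    and z: "z \<in> Xf_set Xfp Up c g b"
  shows "\<exists>t. tailok (fsys fp g c b) (Xset Xp Up b) (Uset Up) (Xf_set Xfp Up c g b) (stage_cost Q R)
      (Vf Vfp \<sigma> b) q z t (if snd (snd z) < b then \<sigma> else 0)"
proof -
  let ?F = "fsys fp g c b"
  obtain xp us \<beta> where zz: "z = (xp, us, \<beta>)" by (cases z) auto
  from z have cs: "(xp = 0 \<and> us = 0 \<and> 0 \<le> \<beta> \<and> \<beta> \<le> c - g - 1) \<or> (xp \<in> Xfp \<and> us \<in> Up \<and> c - g \<le> \<beta> \<and> \<beta> \<le> b)"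
    unfolding zz Xf_set_def by auto
  have qgpos: "int q * g \<ge> 1" using qg gcb by linarith
  have ig: "\<And>i. int i * g \<ge> 0" using gcb by simp
  have sig: "\<And>i. int (Suc i) * g \<ge> g" using gcb by (simp add: distrib_right)
  show ?thesis
  proof (cases "xp = 0 \<and> us = 0 \<and> 0 \<le> \<beta> \<and> \<beta> \<le> c - g - 1")
    case True
    then have xp: "xp = 0" and us: "us = 0" and b0: "0 \<le> \<beta>" "\<beta> \<le> c - g - 1" by auto
    let ?t = "\<lambda>i::nat. (0::real^'m, 0::nat)"
    have tr: "pred_traj ?F z ?t i = (0, 0, min (\<beta> + int i * g) b)" for i
    proof (induction i)
      case 0 then show ?case using zz xp us b0 gcb by simp
    next
      case (Suc i)
      have "min (min (\<beta> + int i * g) b + g) b = min (\<beta> + int (Suc i) * g) b"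
        using gcb by (simp add: distrib_right min_def)
      then show ?case using Suc by (simp add: fsys_hold0 fp0)
    qed
    let ?bq = "min (\<beta> + int q * g) b"
    have memX: "\<forall>i<q. pred_traj ?F z ?t i \<in> Xset Xp Up b \<and> ?t i \<in> Uset Up"
      using tr Xp0 Up0 b0 gcb ig unfolding Xset_def Uset_def by auto
    have memF: "pred_traj ?F z ?t q \<in> Xf_set Xfp Up c g b"
      unfolding tr Xf_set_def using A1(2) Up0 b0 gcb qgpos by auto
    have sum0: "(\<Sum>i<q. stage_cost Q R (pred_traj ?F z ?t i) (?t i)) = 0"
      by (simp add: tr stage_cost_def)
    have Vend: "Vf Vfp \<sigma> b (pred_traj ?F z ?t q) = \<sigma> * (real_of_int b ^ 2 - real_of_int ?bq ^ 2)"
      unfolding tr Vf_def using A2(1) by simp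
    have Vz: "Vf Vfp \<sigma> b z = \<sigma> * (real_of_int b ^ 2 - real_of_int \<beta> ^ 2)"
      unfolding zz Vf_def using A2(1) xp by simp
    have gain: "\<sigma> * (real_of_int b ^ 2 - real_of_int ?bq ^ 2) - \<sigma> * (real_of_int b ^ 2 - real_of_int \<beta> ^ 2)
     \<le> - (if \<beta> < b then \<sigma> else 0)"
      by (rule beta_gain) (use b0 gcb qgpos sigma in auto)
    have "tailok ?F (Xset Xp Up b) (Uset Up) (Xf_set Xfp Up c g b) (stage_cost Q R)
      (Vf Vfp \<sigma> b) q z ?t (if snd (snd z) < b then \<sigma> else 0)"
    proof -
      have C: "(\<Sum>i<q. stage_cost Q R (pred_traj ?F z ?t i) (?t i)) + Vf Vfp \<sigma> b (pred_traj ?F z ?t q) - Vf Vfp \<sigma> b z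
         \<le> - (if snd (snd z) < b then \<sigma> else 0)"
        unfolding sum0 Vend Vz using gain zz by simp
      show ?thesis unfolding tailok_def using memX memF C by blast
    qed
    then show ?thesis by blast
  next
    case False
    with cs have xp: "xp \<in> Xfp" and us: "us \<in> Up" and b0: "c - g \<le> \<beta>" "\<beta> \<le> b" by auto
    define k where "k = kp xp"
    have k: "k \<in> Up" using A1(3) xp k_def by simp
    let ?t = "\<lambda>i::nat. (k, if i = 0 then 1 else 0::nat)"
    have tr: "pred_traj ?F z ?t (Suc i) = (fpi fp (Suc i) xp k, k, min (\<beta> + int (Suc i) * g - c) b)" for i
    proof (induction i)
      case 0 then show ?case using zz by (simp add: fsys_def fpi_Suc fpi_0)
    next
      case (Suc i)
      have "min (min (\<beta> + int (Suc i) * g - c) b + g) b = min (\<beta> + int (Suc (Suc i)) * g - c) b"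
        using gcb by (simp add: distrib_right min_def)
      then show ?case using Suc by (simp add: fsys_hold fpi_Suc del: of_nat_Suc)
    qed
    have q': "q = Suc (q - 1)" using q1 by simp
    let ?bq = "min (\<beta> + int q * g - c) b"
    have trq: "pred_traj ?F z ?t q = (fpi fp q xp k, k, ?bq)" using tr[of "q-1"] q' by simp
    have memX: "\<forall>i<q. pred_traj ?F z ?t i \<in> Xset Xp Up b \<and> ?t i \<in> Uset Up"
    proof (intro allI impI)
      fix i assume i: "i < q"
      show "pred_traj ?F z ?t i \<in> Xset Xp Up b \<and> ?t i \<in> Uset Up"
      proof (cases i)
        case 0 then show ?thesis using zz xp us b0 gcb A1(1) k unfolding Xset_def Uset_def by auto
      next
        case (Suc j)
        have "fpi fp (Suc j) xp k \<in> Xp" using A1(4) xp i Suc unfolding k_def by auto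
        moreover have "0 \<le> min (\<beta> + int (Suc j) * g - c) b" using sig[of j] b0 gcb by linarith
        moreover have "min (\<beta> + int (Suc j) * g - c) b \<le> b" by simp
        ultimately show ?thesis using Suc tr[of j] k unfolding Xset_def Uset_def by (simp del: of_nat_Suc)
      qed
    qed
    have memF: "pred_traj ?F z ?t q \<in> Xf_set Xfp Up c g b"
      unfolding trq Xf_set_def using A1(4) xp k b0 gcb qg unfolding k_def by auto
    have terms: "stage_cost Q R (pred_traj ?F z ?t i) (?t i) = qf Q (fpi fp i xp k) + qf R k" for i
    proof (cases i)
      case 0 then show ?thesis using zz by (simp add: stage_cost_def fpi_0)
    next
      case (Suc j) then show ?thesis using tr[of j] by (simp add: stage_cost_def)
    qed
    have sumq: "(\<Sum>i<q. stage_cost Q R (pred_traj ?F z ?t i) (?t i)) = (\<Sum>i<q. qf Q (fpi fp i xp k)) + real q * qf R k"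
      unfolding terms by (simp add: sum.distrib)
    have Vend: "Vf Vfp \<sigma> b (pred_traj ?F z ?t q) = Vfp (fpi fp q xp k) + \<sigma> * (real_of_int b ^ 2 - real_of_int ?bq ^ 2)"
      unfolding trq Vf_def by simp
    have Vz: "Vf Vfp \<sigma> b z = Vfp xp + \<sigma> * (real_of_int b ^ 2 - real_of_int \<beta> ^ 2)"
      unfolding zz Vf_def by simp
    have dec: "Vfp (fpi fp q xp k) - Vfp xp \<le> - real q * qf R k - (\<Sum>i<q. qf Q (fpi fp i xp k))"
      using A2(2) xp unfolding k_def by blast
    have gain: "\<sigma> * (real_of_int b ^ 2 - real_of_int ?bq ^ 2) - \<sigma> * (real_of_int b ^ 2 - real_of_int \<beta> ^ 2)
     \<le> - (if \<beta> < b then \<sigma> else 0)"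
      by (rule beta_gain) (use b0 gcb qg sigma in auto)
    have C: "(\<Sum>i<q. stage_cost Q R (pred_traj ?F z ?t i) (?t i)) + Vf Vfp \<sigma> b (pred_traj ?F z ?t q) - Vf Vfp \<sigma> b z
       \<le> - (if snd (snd z) < b then \<sigma> else 0)"
      unfolding sumq Vend Vz using dec gain zz by simp
    have "tailok ?F (Xset Xp Up b) (Uset Up) (Xf_set Xfp Up c g b) (stage_cost Q R)
      (Vf Vfp \<sigma> b) q z ?t (if snd (snd z) < b then \<sigma> else 0)"
      unfolding tailok_def using memX memF C by blast
    then show ?thesis by blast
  qed
qed
lemma qf_scale: "qf A (a *\<^sub>R v) = a^2 * qf A v"
  by (simp add: qf_def matrix_vector_mult_scaleR power2_eq_square)

lemma posdef_nonneg: "pos_def_mat A \<Longrightarrow> qf A v \<ge> 0"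
  unfolding pos_def_mat_def by (cases "v = 0") (auto simp: qf_def intro: less_imp_le)

lemma posdef_bound:
  fixes A :: "real^'k^'k"
  assumes "pos_def_mat A" shows "\<exists>m>0. \<forall>v. m * (norm v)^2 \<le> qf A v"
proof -
  have cont: "continuous_on (sphere 0 1) (qf A)" unfolding qf_def by (intro continuous_intros)
  have ne: "sphere (0::real^'k) 1 \<noteq> {}" by simp
  obtain v0 where v0: "v0 \<in> sphere 0 1" "\<forall>y\<in>sphere 0 1. qf A v0 \<le> qf A y"
    using continuous_attains_inf[OF compact_sphere ne cont] by blast
  have "v0 \<noteq> 0" using v0(1) by auto
  then have m: "qf A v0 > 0" using assms unfolding pos_def_mat_def by auto
  have "qf A v0 * (norm v)^2 \<le> qf A v" for v
  proof (cases "v = 0")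
    case True then show ?thesis by (simp add: qf_def)
  next
    case False
    define w where "w = (1 / norm v) *\<^sub>R v"
    have w: "w \<in> sphere 0 1" using False by (simp add: w_def)
    have vw: "v = norm v *\<^sub>R w" using False by (simp add: w_def)
    have "qf A v = (norm v)^2 * qf A w" by (subst vw) (simp add: qf_scale)
    moreover have "qf A v0 \<le> qf A w" using v0(2) w by blast
    ultimately show ?thesis by (metis mult.commute mult_right_mono zero_le_power2)
  qed
  then show ?thesis using m by blast
qed

lemma posdef_tendsto:
  fixes A :: "real^'k^'k"
  assumes "pos_def_mat A" "(\<lambda>k. qf A (v k)) \<longlonglongrightarrow> 0"
  shows "v \<longlonglongrightarrow> 0"
proof -
  obtain m where m: "m > 0" "\<forall>v. m * (norm v)^2 \<le> qf A v" using posdef_bound[OF assms(1)] by blast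
  have "(\<lambda>k. (norm (v k))^2) \<longlonglongrightarrow> 0"
  proof (rule tendsto_sandwich[of "\<lambda>_. 0" _ _ "\<lambda>k. qf A (v k) / m"])
    show "\<forall>\<^sub>F n in sequentially. 0 \<le> (norm (v n))\<^sup>2" by simp
    show "\<forall>\<^sub>F n in sequentially. (norm (v n))\<^sup>2 \<le> qf A (v n) / m"
      using m by (simp add: pos_le_divide_eq mult.commute)
    show "(\<lambda>n. 0) \<longlonglongrightarrow> (0::real)" by simp
    show "(\<lambda>n. qf A (v n) / m) \<longlonglongrightarrow> 0" using tendsto_divide_zero[OF assms(2)] by simp
  qed
  then have "(\<lambda>k. sqrt ((norm (v k))^2)) \<longlonglongrightarrow> sqrt 0" by (rule tendsto_real_sqrt)
  then have "(\<lambda>k. norm (v k)) \<longlonglongrightarrow> 0" by simp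
  then show ?thesis by (simp add: tendsto_norm_zero_iff)
qed

lemma beta_traj:
  assumes "c \<ge> 0"
  shows "snd (snd (pred_traj (fsys fp g c b) y w (i + k))) \<le> snd (snd (pred_traj (fsys fp g c b) y w i)) + int k * g"
proof (induction k)
  case 0 then show ?case by simp
next
  case (Suc k)
  obtain xp us \<beta> where e: "pred_traj (fsys fp g c b) y w (i + k) = (xp, us, \<beta>)" by (cases "pred_traj (fsys fp g c b) y w (i + k)") auto
  obtain uc \<gamma> where e2: "w (i + k) = (uc, \<gamma>)" by (cases "w (i+k)") auto
  have "snd (snd (pred_traj (fsys fp g c b) y w (i + Suc k))) = min (\<beta> + g - int \<gamma> * c) b"
    using e e2 by (simp add: fsys_def Let_def)
  also have "\<dots> \<le> \<beta> + g" using assms by (simp add: min.coboundedI1)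
  finally show ?case using Suc e by (simp add: distrib_right)
qed

theorem theorem1:
  fixes fp :: "real^'n \<Rightarrow> real^'m \<Rightarrow> real^'n"
    and Xp :: "(real^'n) set" and Up :: "(real^'m) set"
    and Q :: "real^'n^'n" and R :: "real^'m^'m"
    and g c b :: int and q :: nat
    and Xfp :: "(real^'n) set" and kp :: "real^'n \<Rightarrow> real^'m" and Vfp :: "real^'n \<Rightarrow> real"
    and \<sigma> :: real and r M N :: nat
    and x :: "nat \<Rightarrow> (real^'n) \<times> (real^'m) \<times> int" and u :: "nat \<Rightarrow> (real^'m) \<times> nat"
  assumes fp0: "fp 0 0 = 0"
    and Xp: "closed Xp" "0 \<in> Xp" and Up: "closed Up" "0 \<in> Up"
    and QR: "pos_def_mat Q" "pos_def_mat R"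
    and gcb: "g \<ge> 1" "c \<ge> g" "b \<ge> c"
    and q_def: "q = nat \<lceil>real_of_int c / real_of_int g\<rceil>"
    and A1: "closed Xfp" "Xfp \<subseteq> Xp" "0 \<in> Xfp" "\<forall>xp\<in>Xfp. kp xp \<in> Up"
      "\<forall>xp\<in>Xfp. (\<forall>i\<in>{1..q-1}. fpi fp i xp (kp xp) \<in> Xp) \<and> fpi fp q xp (kp xp) \<in> Xfp"
    and A2: "continuous_on Xfp Vfp" "Vfp 0 = 0" "\<forall>xp\<in>Xfp. xp \<noteq> 0 \<longrightarrow> Vfp xp > 0"
      "\<forall>xp\<in>Xfp. Vfp (fpi fp q xp (kp xp)) - Vfp xp
          \<le> - real q * qf R (kp xp) - (\<Sum>i<q. qf Q (fpi fp i xp (kp xp)))"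
    and A3: "real_of_int c / real_of_int g \<notin> \<int>"
    and sigma: "\<sigma> > 0"
    and rMN: "r \<ge> 1" "M = r * q" "N \<ge> M"
    and dyn: "\<forall>k. x (Suc k) = fsys fp g c b (x k) (u k)"
    and rollout: "\<forall>j. P_feasible fp g c b Xp Up Xfp N (x (j * M)) \<longrightarrow>
        (\<exists>us. P_optimal fp g c b Xp Up Xfp Q R Vfp \<sigma> N (x (j * M)) us
              \<and> (\<forall>i<M. u (j * M + i) = us i))"
    and init: "P_feasible fp g c b Xp Up Xfp N (x 0)"
  shows "(\<forall>j. P_feasible fp g c b Xp Up Xfp N (x (j * M)))
    \<and> (\<lambda>k. fst (x k)) \<longlonglongrightarrow> 0
    \<and> (\<lambda>k. fst (snd (x k))) \<longlonglongrightarrow> 0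
    \<and> (\<lambda>k. infdist (real_of_int (snd (snd (x k))))
            {real_of_int (max 0 (b - int N * g)) .. real_of_int b}) \<longlonglongrightarrow> 0
    \<and> (\<lambda>j. infdist (real_of_int (snd (snd (x (j * M)))))
            {real_of_int (max 0 (b - int (N - M) * g)) .. real_of_int b}) \<longlonglongrightarrow> 0"

proof -
  let ?F = "fsys fp g c b"
  let ?X = "Xset Xp Up b"
  let ?U = "Uset Up"
  let ?XF = "Xf_set Xfp Up c g b"
  let ?l = "stage_cost Q R"
  let ?V = "Vf Vfp \<sigma> b"
  define d where "d z = (if snd (snd z) < b then \<sigma> else 0)" for z :: "(real^'n) \<times> (real^'m) \<times> int"
  define feas where "feas y \<longleftrightarrow> ocp_feasible ?F ?X ?U ?XF N y" for y
  have PF: "\<And>y. P_feasible fp g c b Xp Up Xfp N y = feas y" unfolding P_feasible_def feas_def by simp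
  have PO: "\<And>y w. P_optimal fp g c b Xp Up Xfp Q R Vfp \<sigma> N y w = ocp_optimal ?F ?l ?V ?X ?U ?XF N y w"
    unfolding P_optimal_def by simp
  have gpos: "real_of_int g > 0" using gcb by simp
  have cg1: "real_of_int c / real_of_int g \<ge> 1" using gcb gpos by simp
  have ceil: "real_of_int c / real_of_int g \<le> of_int \<lceil>real_of_int c / real_of_int g\<rceil>" by (rule le_of_int_ceiling)
  have "(1::real) \<le> of_int \<lceil>real_of_int c / real_of_int g\<rceil>" using ceil cg1 by linarith
  then have ceil1: "\<lceil>real_of_int c / real_of_int g\<rceil> \<ge> 1" by (metis of_int_1 of_int_le_iff)
  have qint: "int q = \<lceil>real_of_int c / real_of_int g\<rceil>" using q_def ceil1 by simp
  have "int q \<ge> 1" using qint ceil1 by linarith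
  then have q1: "q \<ge> 1" by simp
  have "real_of_int c / real_of_int g \<le> real q" using ceil qint by (metis of_int_of_nat_eq)
  then have "real_of_int c \<le> real q * real_of_int g" using gpos by (simp add: divide_le_eq)
  then have qgc: "c \<le> int q * g" by (metis of_int_le_iff of_int_mult of_int_of_nat_eq)
  have "int q * g \<noteq> c"
  proof
    assume h: "int q * g = c"
    then have "real_of_int c / real_of_int g = real q" using gpos
      by (metis nonzero_mult_div_cancel_right of_int_mult of_int_of_nat_eq order_less_irrefl)
    then show False using A3 by (metis Ints_of_nat)
  qed
  with qgc have qg: "int q * g \<ge> c + 1" by simp
  have M1: "M \<ge> 1" using rMN q1 by simp
  have MN: "M \<le> N" using rMN by simp
  have blk: "\<forall>z\<in>?XF. \<exists>t. tailok ?F ?X ?U ?XF ?l ?V q z t (d z)"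
    using block[OF fp0 Xp(2) Up(2) gcb qg q1 A1(2-5) A2(2) A2(4) sigma] unfolding d_def by blast
  have dnn: "\<forall>z. d z \<ge> 0" using sigma unfolding d_def by simp
  have eqM: "q * Suc (r - 1) = M" using rMN by (cases r) auto
  have tails: "\<forall>z\<in>?XF. \<exists>t. tailok ?F ?X ?U ?XF ?l ?V M z t (d z)"
    using tailok_iter[OF blk dnn, of "r - 1"] unfolding eqM .
  define US where "US j = (SOME us. P_optimal fp g c b Xp Up Xfp Q R Vfp \<sigma> N (x (j*M)) us \<and> (\<forall>i<M. u (j*M+i) = us i))" for j
  have USp: "ocp_optimal ?F ?l ?V ?X ?U ?XF N (x (j*M)) (US j) \<and> (\<forall>i<M. u (j*M+i) = US j i)"
    if "feas (x (j*M))" for j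
  proof -
    from rollout that PF have "\<exists>us. P_optimal fp g c b Xp Up Xfp Q R Vfp \<sigma> N (x (j*M)) us \<and> (\<forall>i<M. u (j*M+i) = us i)"
      by auto
    then have "P_optimal fp g c b Xp Up Xfp Q R Vfp \<sigma> N (x (j*M)) (US j) \<and> (\<forall>i<M. u (j*M+i) = US j i)"
      unfolding US_def by (rule someI_ex)
    then show ?thesis using PO by simp
  qed
  have trajx: "x (j*M + i) = pred_traj ?F (x (j*M)) (US j) i" if fj: "feas (x (j*M))" and iM: "i \<le> M" for j i
    using iM
  proof (induction i)
    case 0 then show ?case by simp
  next
    case (Suc i)
    then have "i < M" by simp
    then have "u (j*M+i) = US j i" using USp[OF fj] by blast
    then show ?case using Suc.IH Suc.prems dyn by simp
  qed
  define J where "J j = ocp_cost ?F ?l ?V N (x (j*M)) (US j)" for j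
  define Z where "Z j = pred_traj ?F (x (j*M)) (US j) N" for j
  have xnext: "x (Suc j * M) = pred_traj ?F (x (j*M)) (US j) M" if "feas (x (j*M))" for j
  proof -
    have "Suc j * M = j * M + M" by simp
    then show ?thesis using trajx[OF that, of M] by (simp add: add.commute)
  qed
  have candj: "\<exists>w. ocp_feasible_seq ?F ?X ?U ?XF N (x (Suc j * M)) w \<and>
      ocp_cost ?F ?l ?V N (x (Suc j * M)) w \<le> J j - (\<Sum>i<M. ?l (x (j*M+i)) (u (j*M+i))) - d (Z j)"
    if fj: "feas (x (j*M))" for j
  proof -
    have fs: "ocp_feasible_seq ?F ?X ?U ?XF N (x (j*M)) (US j)" using USp[OF fj] unfolding ocp_optimal_def by blast
    then have "Z j \<in> ?XF" unfolding Z_def ocp_feasible_seq_def by blast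
    then obtain t where t: "tailok ?F ?X ?U ?XF ?l ?V M (Z j) t (d (Z j))" using tails by blast
    have c: "ocp_feasible_seq ?F ?X ?U ?XF N (pred_traj ?F (x (j*M)) (US j) M) (\<lambda>i. if i < N - M then US j (M+i) else t (i - (N - M)))
     \<and> ocp_cost ?F ?l ?V N (pred_traj ?F (x (j*M)) (US j) M) (\<lambda>i. if i < N - M then US j (M+i) else t (i - (N - M)))
        \<le> ocp_cost ?F ?l ?V N (x (j*M)) (US j) - (\<Sum>i<M. ?l (pred_traj ?F (x (j*M)) (US j) i) (US j i)) - d (pred_traj ?F (x (j*M)) (US j) N)"
      by (rule candidate[OF fs MN t[unfolded Z_def]])
    have sm: "(\<Sum>i<M. ?l (pred_traj ?F (x (j*M)) (US j) i) (US j i)) = (\<Sum>i<M. ?l (x (j*M+i)) (u (j*M+i)))"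
    proof (rule sum.cong)
      fix i assume "i \<in> {..<M}"
      then have i: "i < M" by simp
      then show "?l (pred_traj ?F (x (j*M)) (US j) i) (US j i) = ?l (x (j*M+i)) (u (j*M+i))"
        using trajx[OF fj, of i] USp[OF fj] by simp
    qed simp
    show ?thesis using c unfolding sm xnext[OF fj, symmetric] J_def Z_def by blast
  qed
  have feas_all: "feas (x (j*M))" for j
  proof (induction j)
    case 0 then show ?case using init PF by simp
  next
    case (Suc j) then show ?case using candj[OF Suc] unfolding feas_def ocp_feasible_def by blast
  qed
  have fsj: "ocp_feasible_seq ?F ?X ?U ?XF N (x (j*M)) (US j)" for j
    using USp[OF feas_all] unfolding ocp_optimal_def by blast
  have Jdec: "J (Suc j) \<le> J j - (\<Sum>i<M. ?l (x (j*M+i)) (u (j*M+i))) - d (Z j)" for j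
  proof -
    obtain w where w: "ocp_feasible_seq ?F ?X ?U ?XF N (x (Suc j * M)) w"
      "ocp_cost ?F ?l ?V N (x (Suc j * M)) w \<le> J j - (\<Sum>i<M. ?l (x (j*M+i)) (u (j*M+i))) - d (Z j)"
      using candj[OF feas_all] by blast
    have "J (Suc j) \<le> ocp_cost ?F ?l ?V N (x (Suc j * M)) w"
      using USp[OF feas_all, of "Suc j"] w(1) unfolding J_def ocp_optimal_def by blast
    then show ?thesis using w(2) by linarith
  qed
  have QRnn: "\<And>v. qf Q v \<ge> 0" "\<And>v. qf R v \<ge> 0" using posdef_nonneg QR by auto
  have lQ: "qf Q (fst y) \<le> ?l y v" and lR: "qf R (fst (snd (?F y v))) \<le> ?l y v" and lnn: "0 \<le> ?l y v"
    if "v \<in> ?U" for y v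
  proof -
    obtain xp us \<beta> where y: "y = (xp, us, \<beta>)" by (cases y) auto
    obtain uc \<gamma> where v: "v = (uc, \<gamma>)" by (cases v) auto
    have "\<gamma> = 0 \<or> \<gamma> = 1" using that v unfolding Uset_def by auto
    then have "qf Q (fst y) \<le> ?l y v \<and> qf R (fst (snd (?F y v))) \<le> ?l y v \<and> 0 \<le> ?l y v"
      using QRnn(1)[of xp] QRnn(2)[of uc] QRnn(2)[of us]
      by (auto simp: y v stage_cost_def fsys_def)
    then show "qf Q (fst y) \<le> ?l y v" "qf R (fst (snd (?F y v))) \<le> ?l y v" "0 \<le> ?l y v" by auto
  qed
  have Vnn: "?V y \<ge> 0" if "y \<in> ?XF" for y
  proof -
    obtain xp us \<beta> where y: "y = (xp, us, \<beta>)" by (cases y) auto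
    have h: "(xp = 0 \<or> xp \<in> Xfp) \<and> 0 \<le> \<beta> \<and> \<beta> \<le> b" using that gcb unfolding y Xf_set_def by auto
    have "Vfp xp \<ge> 0" using h A2(2,3) by (cases "xp = 0") (auto intro: less_imp_le)
    moreover have "real_of_int \<beta> ^ 2 \<le> real_of_int b ^ 2" using h by (intro power_mono) auto
    ultimately show ?thesis using sigma unfolding y Vf_def by simp
  qed
  have Jnn: "J j \<ge> 0" for j
  proof -
    have "\<forall>i<N. pred_traj ?F (x (j*M)) (US j) i \<in> ?X \<and> US j i \<in> ?U" "Z j \<in> ?XF"
      using fsj[of j] unfolding ocp_feasible_seq_def Z_def by auto
    then have "0 \<le> (\<Sum>i<N. ?l (pred_traj ?F (x (j*M)) (US j) i) (US j i))" "0 \<le> ?V (Z j)"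
      by (auto intro!: sum_nonneg lnn Vnn simp del: split_paired_All)
    then show ?thesis unfolding J_def ocp_cost_def Z_def by simp
  qed
  have decomp: "k = (k div M) * M + k mod M" "k mod M < M" for k
    using M1 by simp_all
  have xk: "x k = pred_traj ?F (x ((k div M) * M)) (US (k div M)) (k mod M)"
    and uk: "u k = US (k div M) (k mod M)" for k
  proof -
    have "x ((k div M) * M + k mod M) = pred_traj ?F (x ((k div M) * M)) (US (k div M)) (k mod M)"
      by (rule trajx[OF feas_all]) (use decomp(2)[of k] in simp)
    then show "x k = pred_traj ?F (x ((k div M) * M)) (US (k div M)) (k mod M)" using decomp(1)[of k] by simp
    have "u ((k div M) * M + k mod M) = US (k div M) (k mod M)" using USp[OF feas_all] decomp(2)[of k] by blast
    then show "u k = US (k div M) (k mod M)" using decomp(1)[of k] by simp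
  qed
  have xu: "x k \<in> ?X \<and> u k \<in> ?U" for k
  proof -
    have "k mod M < N" using decomp(2)[of k] MN by simp
    then show ?thesis using fsj[of "k div M"] unfolding xk[of k] uk[of k] ocp_feasible_seq_def by blast
  qed
  have lk: "?l (x k) (u k) \<ge> 0" for k by (intro lnn) (use xu[of k] in blast)
  have partial: "(\<Sum>k<j*M. ?l (x k) (u k)) + (\<Sum>i<j. d (Z i)) \<le> J 0 - J j" for j
  proof (induction j)
    case 0 then show ?case by simp
  next
    case (Suc j)
    have "(\<Sum>k<Suc j*M. ?l (x k) (u k)) = (\<Sum>k<j*M + M. ?l (x k) (u k))" by (simp add: add.commute)
    also have "\<dots> = (\<Sum>k<j*M. ?l (x k) (u k)) + (\<Sum>i<M. ?l (x (j*M+i)) (u (j*M+i)))" by (rule sum_split_add)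
    finally show ?case using Suc.IH Jdec[of j] by simp
  qed
  have sumd_nn: "0 \<le> (\<Sum>i<j. d (Z i))" for j using dnn by (intro sum_nonneg) blast
  have suml_nn: "0 \<le> (\<Sum>i<j. ?l (x i) (u i))" for j using lk by (intro sum_nonneg) blast
  have summ: "summable (\<lambda>k. ?l (x k) (u k))"
  proof (rule summableI_nonneg_bounded[where x="J 0"])
    show "0 \<le> ?l (x k) (u k)" for k by (rule lk)
    fix n
    have "n \<le> n * M" using M1 by simp
    then have "(\<Sum>k<n. ?l (x k) (u k)) \<le> (\<Sum>k<n*M. ?l (x k) (u k))"
      by (intro sum_mono2) (auto simp: lk)
    then show "(\<Sum>k<n. ?l (x k) (u k)) \<le> J 0" using partial[of n] Jnn[of n] sumd_nn[of n] by linarith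
  qed
  have summd: "summable (\<lambda>j. d (Z j))"
  proof (rule summableI_nonneg_bounded[where x="J 0"])
    show "0 \<le> d (Z j)" for j using dnn by blast
    fix n
    show "(\<Sum>i<n. d (Z i)) \<le> J 0" using partial[of n] Jnn[of n] suml_nn[of "n*M"] by linarith
  qed
  have l0: "(\<lambda>k. ?l (x k) (u k)) \<longlonglongrightarrow> 0" by (rule summable_LIMSEQ_zero[OF summ])
  have d0: "(\<lambda>j. d (Z j)) \<longlonglongrightarrow> 0" by (rule summable_LIMSEQ_zero[OF summd])
  have conv_xp: "(\<lambda>k. fst (x k)) \<longlonglongrightarrow> 0"
  proof (rule posdef_tendsto[OF QR(1)])
    show "(\<lambda>k. qf Q (fst (x k))) \<longlonglongrightarrow> 0"
    proof (rule tendsto_sandwich[of "\<lambda>_. 0" _ _ "\<lambda>k. ?l (x k) (u k)"])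
      show "\<forall>\<^sub>F n in sequentially. 0 \<le> qf Q (fst (x n))" using QRnn by simp
      show "\<forall>\<^sub>F n in sequentially. qf Q (fst (x n)) \<le> ?l (x n) (u n)" using lQ xu by simp
    qed (simp_all add: l0)
  qed
  have conv_us: "(\<lambda>k. fst (snd (x k))) \<longlonglongrightarrow> 0"
  proof (rule LIMSEQ_imp_Suc, rule posdef_tendsto[OF QR(2)])
    show "(\<lambda>k. qf R (fst (snd (x (Suc k))))) \<longlonglongrightarrow> 0"
    proof (rule tendsto_sandwich[of "\<lambda>_. 0" _ _ "\<lambda>k. ?l (x k) (u k)"])
      show "\<forall>\<^sub>F n in sequentially. 0 \<le> qf R (fst (snd (x (Suc n))))" using QRnn by simp
      show "\<forall>\<^sub>F n in sequentially. qf R (fst (snd (x (Suc n)))) \<le> ?l (x n) (u n)" using lR xu dyn by simp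
    qed (simp_all add: l0)
  qed
  have "\<forall>\<^sub>F j in sequentially. d (Z j) < \<sigma>" by (rule order_tendstoD(2)[OF d0 sigma])
  then obtain J0 where J0: "\<And>j. j \<ge> J0 \<Longrightarrow> d (Z j) < \<sigma>" unfolding eventually_sequentially by blast
  have betaZ: "snd (snd (Z j)) \<ge> b" if "j \<ge> J0" for j
    using J0[OF that] unfolding d_def by (auto split: if_splits)
  have lowb: "snd (snd (pred_traj ?F (x (j*M)) (US j) i)) \<ge> b - int (N - i) * g" if "j \<ge> J0" "i \<le> N" for j i
  proof -
    have "snd (snd (pred_traj ?F (x (j*M)) (US j) (i + (N - i)))) \<le> snd (snd (pred_traj ?F (x (j*M)) (US j) i)) + int (N - i) * g"
      by (rule beta_traj) (use gcb in simp)
    moreover have "i + (N - i) = N" using that by simp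
    ultimately show ?thesis using betaZ[OF that(1)] unfolding Z_def by simp
  qed
  have betaX: "0 \<le> snd (snd (x k)) \<and> snd (snd (x k)) \<le> b" for k
    using xu[of k] unfolding Xset_def by (auto simp: mem_Times_iff)
  have conv_b1: "(\<lambda>k. infdist (real_of_int (snd (snd (x k))))
            {real_of_int (max 0 (b - int N * g)) .. real_of_int b}) \<longlonglongrightarrow> 0"
  proof (rule tendsto_eventually, unfold eventually_sequentially, intro exI allI impI)
    fix k assume k: "J0 * M \<le> k"
    have j: "k div M \<ge> J0" using k M1 by (metis div_le_mono div_mult_self_is_m less_le_trans zero_less_one)
    have "snd (snd (x k)) \<ge> b - int (N - k mod M) * g"
      unfolding xk[of k] by (rule lowb[OF j]) (use decomp(2)[of k] MN in simp)
    moreover have "int (N - k mod M) * g \<le> int N * g" using gcb by (intro mult_right_mono) auto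
    ultimately have "snd (snd (x k)) \<ge> max 0 (b - int N * g)" using betaX[of k] by simp
    then have "real_of_int (snd (snd (x k))) \<in> {real_of_int (max 0 (b - int N * g)) .. real_of_int b}"
      using betaX[of k] by simp
    then show "infdist (real_of_int (snd (snd (x k)))) {real_of_int (max 0 (b - int N * g)) .. real_of_int b} = 0"
      by simp
  qed
  have conv_b2: "(\<lambda>j. infdist (real_of_int (snd (snd (x (j * M)))))
            {real_of_int (max 0 (b - int (N - M) * g)) .. real_of_int b}) \<longlonglongrightarrow> 0"
  proof (rule tendsto_eventually, unfold eventually_sequentially, intro exI allI impI)
    fix j assume j: "Suc J0 \<le> j"
    then obtain j' where j': "j = Suc j'" "j' \<ge> J0" by (cases j) auto
    have "snd (snd (x (j * M))) \<ge> b - int (N - M) * g"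
      unfolding j'(1) xnext[OF feas_all] by (rule lowb[OF j'(2) MN])
    then have "snd (snd (x (j*M))) \<ge> max 0 (b - int (N - M) * g)" using betaX[of "j*M"] by simp
    then have "real_of_int (snd (snd (x (j*M)))) \<in> {real_of_int (max 0 (b - int (N - M) * g)) .. real_of_int b}"
      using betaX[of "j*M"] by simp
    then show "infdist (real_of_int (snd (snd (x (j*M))))) {real_of_int (max 0 (b - int (N - M) * g)) .. real_of_int b} = 0"
      by simp
  qed
  show ?thesis using feas_all PF conv_xp conv_us conv_b1 conv_b2 by simp
qed

end
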